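(* Let $k\in\mathbb C\setminus\mathbb Q$, $n,m\in\mathbb Z_{>0}$, $p_0=n+k^{-1}m$. For bipartitions $\alpha,\tilde\alpha\in\mathcal P_{n,m}$, $\alpha$ is $\mathcal E$-equivalent to $\tilde\alpha$ if and only if $\omega(\alpha)$ is $\mathcal R$-equivalent to $\omega(\tilde\alpha)$. In other words, the involution $\omega$ of $\mathcal P_{n,m}$ transforms the equivalence relation $\mathcal E$ into $\mathcal R$.
   Context: Partitions are identified with Young diagrams, i.e. finite sets of boxes $(i,j)\in\mathbb Z_{>0}^2$ ($i$ = row, $j$ = column) closed under moving up or left; a bipartition is a pair $\alpha=(\lambda,\mu)$ of partitions, with inclusion and set operations componentwise. For a box $x=(i,j)$, $c(x,a)=(j-1)+k(i-1)+a$, and $b_r(\alpha,k,p_0)=\sum_{x\in\lambda}c(x,0)^{r-1}+(-1)^r\sum_{y\in\mu}c(y,1+k-kp_0)^{r-1}$ for $r\ge1$. Bipartitions $\alpha,\tilde\alpha$ are $\mathcal E$-equivalent if $b_r(\alpha,k,p_0)=b_r(\tilde\alpha,k,p_0)$ for all $r\ge1$. Let $\pi(n,m)=\{(i,j):1\le i\le n,1\le j\le m\}$, $\theta(i,j)=(n-i+1,m-j+1)$ on $\pi(n,m)$, and let $\mathcal P_{n,m}$ be the set of bipartitions $(\lambda,\mu)$ with $\lambda,\mu\subset\pi(n,m)$. The involution $\omega:\mathcal P_{n,m}\to\mathcal P_{n,m}$ is $\omega(\lambda,\mu)=(\lambda,\pi(n,m)\setminus\theta(\mu))$. Bipartitions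 $(\lambda,\mu)$ and $(\tilde\lambda,\tilde\mu)$ are $\mathcal R$-equivalent if $\lambda\cap\mu=\tilde\lambda\cap\tilde\mu$ and $\lambda\cup\mu=\tilde\lambda\cup\tilde\mu$. *)

theory Defs
  imports Complex_Main
begin

type_synonym box = "nat \<times> nat"
type_synonym bipartition = "box set \<times> box set"

definition is_partition :: "box set \<Rightarrow> bool" where
  "is_partition L \<longleftrightarrow> finite L \<and> (\<forall>(i,j)\<in>L. 1 \<le> i \<and> 1 \<le> j) \<and>
     (\<forall>i j i' j'. (i,j) \<in> L \<longrightarrow> 1 \<le> i' \<longrightarrow> i' \<le> i \<longrightarrow> 1 \<le> j' \<longrightarrow> j' \<le> j \<longrightarrow> (i',j') \<in> L)"

definition cbox :: "complex \<Rightarrow> box \<Rightarrow> complex \<Rightarrow> complex" where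
  "cbox k x a = (of_nat (snd x) - 1) + k * (of_nat (fst x) - 1) + a"

definition b_r :: "nat \<Rightarrow> bipartition \<Rightarrow> complex \<Rightarrow> complex \<Rightarrow> complex" where
  "b_r r \<alpha> k p0 =
     (\<Sum>x\<in>fst \<alpha>. cbox k x 0 ^ (r - 1))
     + (-1) ^ r * (\<Sum>y\<in>snd \<alpha>. cbox k y (1 + k - k * p0) ^ (r - 1))"

definition E_equiv :: "complex \<Rightarrow> complex \<Rightarrow> bipartition \<Rightarrow> bipartition \<Rightarrow> bool" where
  "E_equiv k p0 \<alpha> \<beta> \<longleftrightarrow> (\<forall>r\<ge>1. b_r r \<alpha> k p0 = b_r r \<beta> k p0)"

definition rect :: "nat \<Rightarrow> nat \<Rightarrow> box set" where
  "rect n m = {(i,j). 1 \<le> i \<and> i \<le> n \<and> 1 \<le> j \<and> j \<le> m}"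

definition theta :: "nat \<Rightarrow> nat \<Rightarrow> box \<Rightarrow> box" where
  "theta n m x = (n - fst x + 1, m - snd x + 1)"

definition P_nm :: "nat \<Rightarrow> nat \<Rightarrow> bipartition set" where
  "P_nm n m = {(L, M). is_partition L \<and> is_partition M \<and> L \<subseteq> rect n m \<and> M \<subseteq> rect n m}"

definition omega :: "nat \<Rightarrow> nat \<Rightarrow> bipartition \<Rightarrow> bipartition" where
  "omega n m \<alpha> = (fst \<alpha>, rect n m - theta n m ` snd \<alpha>)"

definition R_equiv :: "bipartition \<Rightarrow> bipartition \<Rightarrow> bool" where
  "R_equiv \<alpha> \<beta> \<longleftrightarrow> fst \<alpha> \<inter> snd \<alpha> = fst \<beta> \<inter> snd \<beta> \<and> fst \<alpha> \<union> snd \<alpha> = fst \<beta> \<union> snd \<beta>"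

end

theory Submission
  imports Defs
begin

lemma powsum_zero:
  fixes c :: "'a \<Rightarrow> complex"
  assumes "finite U" "inj_on c U" "\<forall>r. (\<Sum>x\<in>U. h x * c x ^ r) = 0"
  shows "\<forall>x\<in>U. h x = 0"
  using assms
proof (induction U arbitrary: h rule: finite_induct)
  case empty then show ?case by simp
next
  case (insert a S)
  define h' where "h' x = h x * (c x - c a)" for x
  have "\<forall>r. (\<Sum>x\<in>insert a S. h' x * c x ^ r) = 0"
  proof
    fix r
    have "(\<Sum>x\<in>insert a S. h' x * c x ^ r) = (\<Sum>x\<in>insert a S. h x * c x ^ Suc r) - c a * (\<Sum>x\<in>insert a S. h x * c x ^ r)"
      by (simp add: h'_def sum_subtractf sum_distrib_left algebra_simps)
    moreover have "(\<Sum>x\<in>insert a S. h x * c x ^ Suc r) = 0" "(\<Sum>x\<in>insert a S. h x * c x ^ r) = 0"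
      using insert.prems(2) by blast+
    ultimately show "(\<Sum>x\<in>insert a S. h' x * c x ^ r) = 0" by (simp only:) simp
  qed
  then have "\<forall>r. (\<Sum>x\<in>S. h' x * c x ^ r) = 0" using insert.hyps by (simp add: h'_def)
  moreover have "inj_on c S" using insert.prems by auto
  ultimately have "\<forall>x\<in>S. h' x = 0" using insert.IH by blast
  moreover have "\<forall>x\<in>S. c x \<noteq> c a" using insert.prems insert.hyps by (auto simp: inj_on_def)
  ultimately have S0: "\<forall>x\<in>S. h x = 0" by (auto simp: h'_def)
  have "(\<Sum>x\<in>insert a S. h x * c x ^ 0) = 0" using insert.prems by blast
  then have "h a = 0" using insert.hyps S0 by simp
  with S0 show ?case by simp
qed

lemma c_inj:
  assumes "k \<notin> \<rat>"
  shows "inj (\<lambda>x. cbox k x 0)"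
proof (rule injI)
  fix x y :: box
  assume eq: "cbox k x 0 = cbox k y 0"
  obtain i j where x: "x = (i,j)" by (cases x)
  obtain i' j' where y: "y = (i',j')" by (cases y)
  have e: "of_nat j - of_nat j' = k * (of_nat i' - of_nat i)"
    using eq by (simp add: cbox_def x y algebra_simps)
  have "i = i'"
  proof (rule ccontr)
    assume "i \<noteq> i'"
    then have nz: "(of_nat i' - of_nat i :: complex) \<noteq> 0" by simp
    then have "k = (of_nat j - of_nat j') / (of_nat i' - of_nat i)" using e by (simp add: field_simps)
    also have "\<dots> \<in> \<rat>" by (intro Rats_divide Rats_diff Rats_of_nat)
    finally have "k \<in> \<rat>" .
    with assms show False by simp
  qed
  with e have "j = j'" by simp
  with \<open>i = i'\<close> show "x = y" by (simp add: x y)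
qed

lemma theta_c:
  assumes "y \<in> rect n m" "p0 = of_nat n + of_nat m / k" "k \<noteq> 0"
  shows "cbox k y (1 + k - k * p0) = - cbox k (theta n m y) 0"
proof -
  obtain i j where y: "y = (i,j)" by (cases y)
  have "i \<le> n" "j \<le> m" using assms(1) by (auto simp: rect_def y)
  then have a: "(of_nat (n - i + 1) :: complex) = of_nat n - of_nat i + 1"
    and b: "(of_nat (m - j + 1) :: complex) = of_nat m - of_nat j + 1" by (simp_all add: of_nat_diff)
  have kp: "k * p0 = k * of_nat n + of_nat m" using assms(2,3) by (simp add: field_simps)
  have "cbox k (theta n m y) 0 = (of_nat m - of_nat j + 1 - 1) + k * (of_nat n - of_nat i + 1 - 1) + 0"
    unfolding cbox_def theta_def y fst_conv snd_conv a b ..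
  then show ?thesis unfolding kp by (simp add: cbox_def y algebra_simps)
qed

lemma theta_inj: "inj_on (theta n m) (rect n m)"
  by (auto simp: inj_on_def theta_def rect_def)

lemma theta_sub: "theta n m ` A \<subseteq> rect n m" if "A \<subseteq> rect n m"
  using that by (auto simp: theta_def rect_def)

lemma finite_rect: "finite (rect n m)"
proof -
  have "rect n m \<subseteq> {1..n} \<times> {1..m}" by (auto simp: rect_def)
  then show ?thesis by (rule finite_subset) simp
qed

definition G :: "complex \<Rightarrow> nat \<Rightarrow> nat \<Rightarrow> nat \<Rightarrow> bipartition \<Rightarrow> complex" where
  "G k n m q \<alpha> = (\<Sum>x\<in>rect n m. ((if x \<in> fst \<alpha> then 1 else 0) + (if x \<in> snd \<alpha> then 1 else 0)) * cbox k x 0 ^ q)"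

lemma sum_sub_if:
  fixes f :: "box \<Rightarrow> complex"
  assumes "L \<subseteq> rect n m"
  shows "(\<Sum>x\<in>rect n m. (if x \<in> L then 1 else 0) * f x) = (\<Sum>x\<in>L. f x)"
proof -
  have "(\<Sum>x\<in>rect n m. (if x \<in> L then 1 else 0) * f x) = (\<Sum>x\<in>rect n m. if x \<in> L then f x else 0)"
    by (rule sum.cong) auto
  also have "\<dots> = (\<Sum>x\<in>rect n m \<inter> L. f x)" using finite_rect by (simp add: sum.inter_restrict)
  also have "rect n m \<inter> L = L" using assms by blast
  finally show ?thesis .
qed

lemma b_r_formula:
  assumes "\<alpha> \<in> P_nm n m" "r \<ge> 1" "p0 = of_nat n + of_nat m / k" "k \<noteq> 0"
  shows "b_r r \<alpha> k p0 = G k n m (r - 1) (omega n m \<alpha>) - (\<Sum>x\<in>rect n m. cbox k x 0 ^ (r - 1))"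
proof -
  obtain L M where a: "\<alpha> = (L, M)" by (cases \<alpha>)
  have LU: "L \<subseteq> rect n m" and MU: "M \<subseteq> rect n m" using assms(1) by (auto simp: P_nm_def a)
  let ?c = "\<lambda>x. cbox k x 0 ^ (r - 1)"
  have sgn: "(-1) ^ r * (- z) ^ (r - 1) = - (z ^ (r - 1))" for z :: complex
  proof -
    obtain s where "r = Suc s" using assms(2) by (cases r) auto
    have "(- z) ^ s = (-1)^s * z^s" by (metis power_minus)
    then have "(-1) ^ Suc s * (- z) ^ s = ((-1)^s * (-1)^s) * (-1) * z^s" by (simp add: algebra_simps)
    also have "(-1::complex)^s * (-1)^s = 1" by (metis power_mult_distrib mult_minus1 power_one minus_minus)
    finally show ?thesis using \<open>r = Suc s\<close> by simp
  qed
  have "(-1) ^ r * (\<Sum>y\<in>M. cbox k y (1 + k - k * p0) ^ (r - 1)) = (\<Sum>y\<in>M. (-1) ^ r * (- cbox k (theta n m y) 0) ^ (r - 1))"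
    using theta_c[OF _ assms(3,4)] MU by (auto simp: sum_distrib_left intro!: sum.cong)
  also have "\<dots> = - (\<Sum>y\<in>M. ?c (theta n m y))" unfolding sgn by (simp only: sum_negf)
  also have "(\<Sum>y\<in>M. ?c (theta n m y)) = (\<Sum>z\<in>theta n m ` M. ?c z)"
    using sum.reindex[OF inj_on_subset[OF theta_inj MU], of ?c] by simp
  also have "\<dots> = (\<Sum>z\<in>rect n m. ?c z) - (\<Sum>z\<in>rect n m - theta n m ` M. ?c z)"
    using sum.subset_diff[OF theta_sub[OF MU] finite_rect, of ?c] by simp
  finally have E: "(-1) ^ r * (\<Sum>y\<in>M. cbox k y (1 + k - k * p0) ^ (r - 1)) =
     (\<Sum>z\<in>rect n m - theta n m ` M. ?c z) - (\<Sum>z\<in>rect n m. ?c z)" by simp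
  have "G k n m (r - 1) (omega n m \<alpha>) = (\<Sum>x\<in>L. ?c x) + (\<Sum>z\<in>rect n m - theta n m ` M. ?c z)"
    unfolding G_def omega_def a fst_conv snd_conv distrib_right sum.distrib
    using sum_sub_if[OF LU, of ?c] sum_sub_if[of "rect n m - theta n m ` M" n m ?c] by auto
  then show ?thesis unfolding b_r_def a fst_conv snd_conv E by simp
qed

lemma cnt_iff:
  "(((if x \<in> A then 1 else 0) + (if x \<in> B then 1 else 0) :: complex) =
    (if x \<in> C then 1 else 0) + (if x \<in> D then 1 else 0)) \<longleftrightarrow>
   ((x \<in> A \<inter> B \<longleftrightarrow> x \<in> C \<inter> D) \<and> (x \<in> A \<union> B \<longleftrightarrow> x \<in> C \<union> D))"
  by (auto split: if_splits)

lemma omega_sub: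
  assumes "\<alpha> \<in> P_nm n m"
  shows "fst (omega n m \<alpha>) \<subseteq> rect n m" "snd (omega n m \<alpha>) \<subseteq> rect n m"
  using assms by (auto simp: P_nm_def omega_def)

theorem mainTheorem2:
  fixes k p0 :: complex and n m :: nat and \<alpha> \<beta> :: bipartition
  assumes "k \<notin> \<rat>" and "n > 0" and "m > 0"
    and "p0 = of_nat n + of_nat m / k"
    and "\<alpha> \<in> P_nm n m" and "\<beta> \<in> P_nm n m"
  shows "E_equiv k p0 \<alpha> \<beta> \<longleftrightarrow> R_equiv (omega n m \<alpha>) (omega n m \<beta>)"
proof -
  have k0: "k \<noteq> 0" using assms(1) by auto
  define A where "A = omega n m \<alpha>"
  define B where "B = omega n m \<beta>"
  define U where "U = rect n m"
  define cA where "cA x = ((if x \<in> fst A then 1 else 0) + (if x \<in> snd A then 1 else 0) :: complex)" for x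
  define cB where "cB x = ((if x \<in> fst B then 1 else 0) + (if x \<in> snd B then 1 else 0) :: complex)" for x
  have GA: "G k n m q A = (\<Sum>x\<in>U. cA x * cbox k x 0 ^ q)" for q by (simp add: G_def cA_def U_def)
  have GB: "G k n m q B = (\<Sum>x\<in>U. cB x * cbox k x 0 ^ q)" for q by (simp add: G_def cB_def U_def)
  have "E_equiv k p0 \<alpha> \<beta> \<longleftrightarrow> (\<forall>r\<ge>1. G k n m (r - 1) A = G k n m (r - 1) B)"
    unfolding E_equiv_def A_def B_def using b_r_formula[OF assms(5) _ assms(4) k0] b_r_formula[OF assms(6) _ assms(4) k0]
    by auto
  also have "\<dots> \<longleftrightarrow> (\<forall>q. G k n m q A = G k n m q B)"
  proof
    assume h: "\<forall>r\<ge>1. G k n m (r - 1) A = G k n m (r - 1) B"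
    show "\<forall>q. G k n m q A = G k n m q B"
    proof
      fix q show "G k n m q A = G k n m q B" using h[rule_format, of "Suc q"] by simp
    qed
  qed auto
  also have "\<dots> \<longleftrightarrow> (\<forall>x\<in>U. cA x = cB x)"
  proof
    assume h: "\<forall>q. G k n m q A = G k n m q B"
    have "\<forall>r. (\<Sum>x\<in>U. (cA x - cB x) * cbox k x 0 ^ r) = 0"
    proof
      fix r
      have "(\<Sum>x\<in>U. (cA x - cB x) * cbox k x 0 ^ r) = G k n m r A - G k n m r B"
        unfolding GA GB by (simp add: sum_subtractf left_diff_distrib)
      then show "(\<Sum>x\<in>U. (cA x - cB x) * cbox k x 0 ^ r) = 0" using h by simp
    qed
    from powsum_zero[OF _ inj_on_subset[OF c_inj[OF assms(1)]] this]
    show "\<forall>x\<in>U. cA x = cB x" using finite_rect U_def by auto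
  next
    assume h: "\<forall>x\<in>U. cA x = cB x"
    show "\<forall>q. G k n m q A = G k n m q B" unfolding GA GB using h by (auto intro!: sum.cong)
  qed
  also have "\<dots> \<longleftrightarrow> R_equiv A B"
  proof -
    have sub: "fst A \<subseteq> U" "snd A \<subseteq> U" "fst B \<subseteq> U" "snd B \<subseteq> U"
      using omega_sub[OF assms(5)] omega_sub[OF assms(6)] by (auto simp: A_def B_def U_def)
    have "(\<forall>x\<in>U. cA x = cB x) \<longleftrightarrow> (\<forall>x\<in>U. (x \<in> fst A \<inter> snd A \<longleftrightarrow> x \<in> fst B \<inter> snd B) \<and> (x \<in> fst A \<union> snd A \<longleftrightarrow> x \<in> fst B \<union> snd B))"
      unfolding cA_def cB_def cnt_iff ..
    also have "\<dots> \<longleftrightarrow> R_equiv A B" unfolding R_equiv_def using sub by blast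
    finally show ?thesis .
  qed
  finally show ?thesis by (simp add: A_def B_def)
qed

end
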